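(* Let $G$ be a finite group of even order which is not a $p$-group for any prime $p$. Then the co-prime graph $\Gamma_{CP}(G)$ is not minimally edge connected.
   Context: The co-prime graph $\Gamma_{CP}(G)$ of a finite group $G$ is the simple undirected graph with vertex set $G$ in which two distinct elements $x,y$ are adjacent if and only if $\gcd(o(x),o(y))=1$. A $p$-group is a group of order $p^n$ for a prime $p$. For a connected graph $\Gamma$, an edge cut-set is a set $S$ of edges such that $\Gamma-S$ is disconnected or has just one vertex, and the edge connectivity $\kappa'(\Gamma)$ is the smallest size of an edge cut-set. $\Gamma$ is minimally edge connected if $\kappa'(\Gamma-\epsilon)=\kappa'(\Gamma)-1$ for every edge $\epsilon$ of $\Gamma$. *)

theory Defs
  imports "HOL-Algebra.Algebra" "HOL-Computational_Algebra.Primes"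
begin

text \<open>Simple undirected graphs are given by a vertex set V and a set E of
  2-element subsets of V (edges).\<close>

definition graph_connected :: "'a set \<Rightarrow> 'a set set \<Rightarrow> bool" where
  "graph_connected V E \<longleftrightarrow>
     (\<forall>u\<in>V. \<forall>v\<in>V. (u, v) \<in> {(x, y). {x, y} \<in> E}\<^sup>*)"

definition edge_cut_set :: "'a set \<Rightarrow> 'a set set \<Rightarrow> 'a set set \<Rightarrow> bool" where
  "edge_cut_set V E S \<longleftrightarrow>
     S \<subseteq> E \<and> (\<not> graph_connected V (E - S) \<or> card V = 1)"

definition edge_connectivity :: "'a set \<Rightarrow> 'a set set \<Rightarrow> nat" where
  "edge_connectivity V E = (LEAST k. \<exists>S. edge_cut_set V E S \<and> card S = k)"

definition minimally_edge_connected :: "'a set \<Rightarrow> 'a set set \<Rightarrow> bool" where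
  "minimally_edge_connected V E \<longleftrightarrow>
     graph_connected V E \<and>
     (\<forall>e\<in>E. edge_connectivity V (E - {e}) = edge_connectivity V E - 1)"

definition coprime_graph_edges :: "('a, 'b) monoid_scheme \<Rightarrow> 'a set set" where
  "coprime_graph_edges G =
     {{x, y} | x y. x \<in> carrier G \<and> y \<in> carrier G \<and> x \<noteq> y \<and>
        coprime (group.ord G x) (group.ord G y)}"

definition is_p_group :: "('a, 'b) monoid_scheme \<Rightarrow> bool" where
  "is_p_group G \<longleftrightarrow> (\<exists>p n. Factorial_Ring.prime (p::nat) \<and> order G = p ^ n)"

end

theory Submission
  imports Defs
begin


definition nbr :: "'a set set \<Rightarrow> 'a \<Rightarrow> 'a set" where
  "nbr E v = {u. {v, u} \<in> E}"

definition simple_on :: "'a set \<Rightarrow> 'a set set \<Rightarrow> bool" where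
  "simple_on V E \<longleftrightarrow> (\<forall>e\<in>E. \<exists>a b. e = {a, b} \<and> a \<in> V \<and> b \<in> V \<and> a \<noteq> b)"

lemma simple_onD: "simple_on V E \<Longrightarrow> e \<in> E \<Longrightarrow> \<exists>a b. e = {a, b} \<and> a \<in> V \<and> b \<in> V \<and> a \<noteq> b"
  unfolding simple_on_def by (erule bspec)

lemma simple_finite: "simple_on V E \<Longrightarrow> finite V \<Longrightarrow> finite E"
proof -
  assume s: "simple_on V E" and f: "finite V"
  have "E \<subseteq> Pow V"
  proof
    fix e assume "e \<in> E"
    then obtain a b where "e = {a, b}" "a \<in> V" "b \<in> V" using simple_onD[OF s] by metis
    then show "e \<in> Pow V" by simp
  qed
  then show ?thesis using f by (meson finite_Pow_iff finite_subset)
qed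

lemma simple_mono: "simple_on V E \<Longrightarrow> F \<subseteq> E \<Longrightarrow> simple_on V F"
  unfolding simple_on_def by blast

lemma nbr_sub: "simple_on V E \<Longrightarrow> nbr E v \<subseteq> V"
proof
  fix u assume s: "simple_on V E" and "u \<in> nbr E v"
  then have "{v, u} \<in> E" by (simp add: nbr_def)
  then obtain a b where "{v, u} = {a, b}" "a \<in> V" "b \<in> V" using simple_onD[OF s] by metis
  then show "u \<in> V" by (metis insertCI insertE singletonD)
qed

lemma nbr_notin: "simple_on V E \<Longrightarrow> v \<notin> nbr E v"
proof
  assume s: "simple_on V E" and "v \<in> nbr E v"
  then have "{v, v} \<in> E" by (simp add: nbr_def)
  then obtain a b where "{v, v} = {a, b}" "a \<noteq> b" using simple_onD[OF s] by metis
  then have "a \<in> {v, v}" "b \<in> {v, v}" by auto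
  then show False using \<open>a \<noteq> b\<close> by simp
qed

lemma rtrancl_first: "(v, u) \<in> R\<^sup>* \<Longrightarrow> u \<noteq> v \<Longrightarrow> \<exists>x. (v, x) \<in> R"
  by (erule converse_rtranclE) auto

lemma two_elems: "2 \<le> card V \<Longrightarrow> \<exists>u v. u \<in> V \<and> v \<in> V \<and> u \<noteq> v"
proof -
  assume a: "2 \<le> card V"
  then have f: "finite V" by (metis card.infinite not_numeral_le_zero)
  then obtain u where u: "u \<in> V" using a by fastforce
  have "card (V - {u}) \<ge> 1" using a u f by (simp add: card_Diff_singleton)
  then have "V - {u} \<noteq> {}" by (metis card.empty not_one_le_zero)
  then obtain v where "v \<in> V - {u}" by blast
  then show ?thesis using u by blast
qed

lemma cut_exists:
  assumes "card V \<ge> 2" "finite V"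
  shows "edge_cut_set V E E"
proof -
  obtain u v where uv: "u \<in> V" "v \<in> V" "u \<noteq> v"
    using two_elems[OF assms(1)] by blast
  have "(u, v) \<notin> {(x, y). {x, y} \<in> E - E}\<^sup>*"
  proof
    assume "(u, v) \<in> {(x, y). {x, y} \<in> E - E}\<^sup>*"
    then obtain x where "(u, x) \<in> {(x, y). {x, y} \<in> E - E}" using uv(3) rtrancl_first by metis
    then show False by simp
  qed
  then have "\<not> graph_connected V (E - E)" unfolding graph_connected_def using uv by blast
  then show ?thesis unfolding edge_cut_set_def by blast
qed

lemma ec_cut:
  assumes "card V \<ge> 2" "finite V"
  shows "\<exists>S. edge_cut_set V E' S \<and> card S = edge_connectivity V E'"
proof -
  have "\<exists>k S. edge_cut_set V E' S \<and> card S = k" using cut_exists[OF assms] by blast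
  then show "\<exists>S. edge_cut_set V E' S \<and> card S = edge_connectivity V E'"
    unfolding edge_connectivity_def by (rule LeastI_ex)
qed

lemma ec_le: "edge_cut_set V E S \<Longrightarrow> edge_connectivity V E \<le> card S"
  unfolding edge_connectivity_def by (rule Least_le) blast

lemma ec_pos:
  assumes "card V \<ge> 2" "finite V" "simple_on V E" "graph_connected V E"
  shows "edge_connectivity V E \<ge> 1"
proof (rule ccontr)
  assume "\<not> ?thesis"
  then have z: "edge_connectivity V E = 0" by simp
  obtain S where S: "edge_cut_set V E S" "card S = edge_connectivity V E" using ec_cut[OF assms(1,2), of E] by blast
  then have "card S = 0" using z by simp
  have "finite E" using simple_finite assms by blast
  then have "S = {}" using S \<open>card S = 0\<close> unfolding edge_cut_set_def by (meson card_0_eq finite_subset)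
  then show False using S assms(1,4) unfolding edge_cut_set_def by simp
qed

lemma ec_le_deg:
  assumes "card V \<ge> 2" "finite V" "simple_on V E" "v \<in> V"
  shows "edge_connectivity V E \<le> card (nbr E v)"
proof -
  define Sv where "Sv = {e\<in>E. v \<in> e}"
  obtain u where u: "u \<in> V" "u \<noteq> v"
    using two_elems[OF assms(1)] by blast
  have "(v, u) \<notin> {(x, y). {x, y} \<in> E - Sv}\<^sup>*"
  proof
    assume "(v, u) \<in> {(x, y). {x, y} \<in> E - Sv}\<^sup>*"
    then obtain x where "(v, x) \<in> {(x, y). {x, y} \<in> E - Sv}" using u(2) rtrancl_first by metis
    then show False by (simp add: Sv_def)
  qed
  then have "\<not> graph_connected V (E - Sv)" unfolding graph_connected_def
    using u assms(4) by blast
  then have cut: "edge_cut_set V E Sv" unfolding edge_cut_set_def Sv_def by blast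
  have "Sv \<subseteq> (\<lambda>u. {v, u}) ` nbr E v"
  proof
    fix e assume "e \<in> Sv"
    then have "e \<in> E" "v \<in> e" unfolding Sv_def by auto
    then obtain a b where ab: "e = {a, b}" using simple_onD[OF assms(3)] by metis
    show "e \<in> (\<lambda>u. {v, u}) ` nbr E v"
    proof (cases "v = a")
      case True
      then have "b \<in> nbr E v" "e = {v, b}" using ab \<open>e \<in> E\<close> unfolding nbr_def by auto
      then show ?thesis by blast
    next
      case False
      then have "v = b" using ab \<open>v \<in> e\<close> by auto
      then have "a \<in> nbr E v" "e = {v, a}" using ab \<open>e \<in> E\<close> unfolding nbr_def by (auto simp: insert_commute)
      then show ?thesis by blast
    qed
  qed
  moreover have "finite (nbr E v)" using nbr_sub assms finite_subset by metis
  ultimately have "card Sv \<le> card (nbr E v)"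
    using card_image_le card_mono finite_imageI le_trans by metis
  then show ?thesis using ec_le[OF cut] by simp
qed

lemma arith_bc: "(b::nat) \<ge> 1 \<Longrightarrow> c \<ge> 1 \<Longrightarrow> b + c \<le> b * c + 1"
proof -
  assume "b \<ge> 1" "c \<ge> 1"
  then obtain b' c' where "b = b' + 1" "c = c' + 1" by (metis le_add_diff_inverse2)
  then show ?thesis by (simp add: algebra_simps)
qed

lemma ec_keep:
  assumes V2: "card V \<ge> 2" "finite V" "simple_on V E"
    and e: "{x, y} \<in> E"
    and hub: "\<forall>u\<in>V. u \<noteq> x \<longrightarrow> {x, u} \<in> E"
    and mindeg: "\<forall>u\<in>V. card (nbr E u) \<ge> \<delta>"
    and ydeg: "card (nbr E y) \<ge> \<delta> + 1"
    and kd: "edge_connectivity V E \<le> \<delta>"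
  shows "edge_connectivity V E \<le> edge_connectivity V (E - {{x, y}})"
proof -
  obtain S where S: "edge_cut_set V (E - {{x, y}}) S" "card S = edge_connectivity V (E - {{x, y}})"
    using ec_cut[OF V2(1,2)] by blast
  define R where "R = {(a, b). {a, b} \<in> E - {{x, y}} - S}"
  have SE: "S \<subseteq> E - {{x, y}}" using S(1) unfolding edge_cut_set_def by blast
  have ncon: "\<not> graph_connected V (E - {{x, y}} - S)" using S(1) V2(1) unfolding edge_cut_set_def by auto
  have finE: "finite E" using simple_finite V2(3,2) by blast
  have finS: "finite S" using SE finE finite_subset by blast
  have symR: "(b, a) \<in> R" if "(a, b) \<in> R" for a b using that by (simp add: R_def insert_commute)
  have symRs: "(b, a) \<in> R\<^sup>*" if "(a, b) \<in> R\<^sup>*" for a b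
    using that
  proof (induction rule: rtrancl_induct)
    case base then show ?case by simp
  next
    case (step c d)
    then show ?case using symR converse_rtrancl_into_rtrancl by metis
  qed
  obtain a0 b0 where ab0: "{x, y} = {a0, b0}" "a0 \<in> V" "b0 \<in> V" using simple_onD[OF V2(3) e] by metis
  have xV: "x \<in> V" and yV: "y \<in> V" using ab0 by (metis insertCI insertE singletonD)+
  have "edge_connectivity V E \<le> card S"
  proof (cases "(x, y) \<in> R\<^sup>*")
    case True
    have "\<not> graph_connected V (E - S)"
    proof
      assume conn: "graph_connected V (E - S)"
      have "{(a, b). {a, b} \<in> E - S} \<subseteq> R\<^sup>*"
      proof
        fix p assume "p \<in> {(a, b). {a, b} \<in> E - S}"
        then obtain a b where p: "p = (a, b)" "{a, b} \<in> E - S" by blast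
        show "p \<in> R\<^sup>*"
        proof (cases "{a, b} = {x, y}")
          case True
          then have "(a = x \<and> b = y) \<or> (a = y \<and> b = x)" by (simp add: doubleton_eq_iff)
          then show ?thesis using \<open>(x, y) \<in> R\<^sup>*\<close> symRs p(1) by blast
        next
          case False
          then have "(a, b) \<in> R" using p(2) by (simp add: R_def)
          then show ?thesis using p(1) by simp
        qed
      qed
      then have "{(a, b). {a, b} \<in> E - S}\<^sup>* \<subseteq> R\<^sup>*" by (rule rtrancl_subset_rtrancl)
      then have "graph_connected V (E - {{x, y}} - S)"
        using conn unfolding graph_connected_def R_def by blast
      then show False using ncon by blast
    qed
    then have "edge_cut_set V E S" using SE unfolding edge_cut_set_def by blast
    then show ?thesis by (rule ec_le)
  next
    case False
    define B where "B = {u \<in> V. (y, u) \<in> R\<^sup>*}"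
    define A where "A = V - B"
    have xA: "x \<in> A" using False xV symRs unfolding A_def B_def by blast
    have yB: "y \<in> B" using yV unfolding B_def by simp
    have finB: "finite B" using V2(2) unfolding B_def by simp
    have bpos: "card B \<ge> 1" using finB yB by (metis One_nat_def Suc_leI card_gt_0_iff empty_iff)
    define P where "P = Sigma B (\<lambda>u. nbr E u \<inter> A)"
    define f where "f = (\<lambda>(u::'a, h::'a). {u, h})"
    have finN: "finite (nbr E u)" for u using nbr_sub[OF V2(3)] V2(2) finite_subset by metis
    have fP: "f ` P \<subseteq> insert {x, y} S"
    proof
      fix q assume "q \<in> f ` P"
      then obtain u h where uh: "u \<in> B" "h \<in> nbr E u" "h \<in> A" "q = {u, h}"
        unfolding P_def f_def by blast
      have hE: "{u, h} \<in> E" using uh(2) by (simp add: nbr_def)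
      show "q \<in> insert {x, y} S"
      proof (rule ccontr)
        assume "q \<notin> insert {x, y} S"
        then have "(u, h) \<in> R" using hE uh(4) by (simp add: R_def)
        moreover have "(y, u) \<in> R\<^sup>*" using uh(1) unfolding B_def by simp
        ultimately have "(y, h) \<in> R\<^sup>*" by (metis rtrancl_into_rtrancl)
        moreover have "h \<in> V" using uh(3) unfolding A_def by simp
        ultimately have "h \<in> B" unfolding B_def by simp
        then show False using uh(3) unfolding A_def by simp
      qed
    qed
    have injf: "inj_on f P"
    proof (rule inj_onI)
      fix p1 p2 assume p: "p1 \<in> P" "p2 \<in> P" "f p1 = f p2"
      obtain u1 h1 where 1: "p1 = (u1, h1)" "u1 \<in> B" "h1 \<in> A" using p(1) unfolding P_def by blast
      obtain u2 h2 where 2: "p2 = (u2, h2)" "u2 \<in> B" "h2 \<in> A" using p(2) unfolding P_def by blast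
      have "{u1, h1} = {u2, h2}" using p(3) 1(1) 2(1) by (simp add: f_def)
      then have "(u1 = u2 \<and> h1 = h2) \<or> (u1 = h2 \<and> h1 = u2)" by (simp add: doubleton_eq_iff)
      moreover have "u1 \<noteq> h2" using 1(2) 2(3) unfolding A_def by blast
      ultimately show "p1 = p2" using 1(1) 2(1) by blast
    qed
    have "card P \<le> card (insert {x, y} S)"
      using card_inj_on_le[OF injf fP] finS by simp
    also have "\<dots> \<le> card S + 1" using finS by (simp add: card_insert_if)
    finally have cPS: "card P \<le> card S + 1" .
    have cP: "card P = (\<Sum>u\<in>B. card (nbr E u \<inter> A))"
      unfolding P_def using finB finN by (simp add: card_SigmaI)
    have t1: "card (nbr E u \<inter> A) \<ge> 1" if "u \<in> B" for u
    proof -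
      have "u \<noteq> x" using that xA unfolding A_def by blast
      moreover have "u \<in> V" using that unfolding B_def by simp
      ultimately have "{x, u} \<in> E" using hub by blast
      then have "x \<in> nbr E u \<inter> A" using xA by (simp add: nbr_def insert_commute)
      then show ?thesis using finN
        by (metis One_nat_def Suc_leI card_gt_0_iff empty_iff finite_Int)
    qed
    have tb: "card (nbr E u) \<le> card (nbr E u \<inter> A) + (card B - 1)" if "u \<in> B" for u
    proof -
      have "nbr E u \<subseteq> (nbr E u \<inter> A) \<union> (B - {u})"
        using nbr_sub[OF V2(3), of u] nbr_notin[OF V2(3), of u] unfolding A_def by blast
      then have "card (nbr E u) \<le> card ((nbr E u \<inter> A) \<union> (B - {u}))"
        using finN finB by (simp add: card_mono)
      also have "\<dots> \<le> card (nbr E u \<inter> A) + card (B - {u})" by (rule card_Un_le)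
      also have "card (B - {u}) = card B - 1" using that finB by simp
      finally show ?thesis .
    qed
    have sumbound: "(\<Sum>u\<in>B. card (nbr E u \<inter> A)) \<ge> \<delta> + 1"
    proof (cases "card B \<ge> \<delta> + 1")
      case True
      have "card B * 1 \<le> (\<Sum>u\<in>B. card (nbr E u \<inter> A))"
        using sum_bounded_below[of B 1 "\<lambda>u. card (nbr E u \<inter> A)"] t1 by simp
      then show ?thesis using True by simp
    next
      case False
      define c where "c = \<delta> + 1 - card B"
      have c1: "c \<ge> 1" using False unfolding c_def by simp
      have tc: "card (nbr E u \<inter> A) \<ge> c" if "u \<in> B" for u
      proof -
        have "u \<in> V" using that unfolding B_def by simp
        then have "\<delta> \<le> card (nbr E u)" using mindeg by blast
        then show ?thesis using tb[OF that] bpos unfolding c_def by linarith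
      qed
      have ty: "card (nbr E y \<inter> A) \<ge> c + 1"
        using tb[OF yB] ydeg False bpos unfolding c_def by simp
      have "(\<Sum>u\<in>B. card (nbr E u \<inter> A)) = card (nbr E y \<inter> A) + (\<Sum>u\<in>B - {y}. card (nbr E u \<inter> A))"
        using finB yB by (simp add: sum.remove)
      moreover have "card (B - {y}) * c \<le> (\<Sum>u\<in>B - {y}. card (nbr E u \<inter> A))"
        using sum_bounded_below[of "B - {y}" c "\<lambda>u. card (nbr E u \<inter> A)"] tc by simp
      moreover have "card (B - {y}) = card B - 1" using finB yB by simp
      ultimately have "(\<Sum>u\<in>B. card (nbr E u \<inter> A)) \<ge> (card B - 1) * c + c + 1"
        using ty by simp
      moreover have "(card B - 1) * c + c = card B * c" using bpos
        by (metis Suc_diff_1 add.commute less_le_trans mult_Suc zero_less_one)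
      moreover have "card B + c \<le> card B * c + 1" using arith_bc bpos c1 by blast
      moreover have "card B + c = \<delta> + 1" using False unfolding c_def by simp
      ultimately show ?thesis by linarith
    qed
    show ?thesis using cPS cP sumbound kd by linarith
  qed
  then show ?thesis using S(2) by simp
qed



lemma invol_even:
  assumes "finite Y" "\<forall>x\<in>Y. f x \<in> Y \<and> f (f x) = x \<and> f x \<noteq> x"
  shows "even (card Y)"
  using assms
proof (induction "card Y" arbitrary: Y rule: less_induct)
  case less
  show ?case
  proof (cases "Y = {}")
    case True then show ?thesis by simp
  next
    case False
    then obtain x where x: "x \<in> Y" by blast
    define Y' where "Y' = Y - {x, f x}"
    have fx: "f x \<in> Y" "f x \<noteq> x" using less.prems(2) x by auto
    have cY: "card Y = card Y' + 2"
    proof -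
      have "{x, f x} \<subseteq> Y" using x fx by simp
      then have "card Y' = card Y - card {x, f x}" unfolding Y'_def
        using less.prems(1) by (simp add: card_Diff_subset finite_subset)
      moreover have "card {x, f x} = 2" using fx(2) by simp
      moreover have "card {x, f x} \<le> card Y" using \<open>{x, f x} \<subseteq> Y\<close> less.prems(1) card_mono by blast
      ultimately show ?thesis by linarith
    qed
    have "\<forall>u\<in>Y'. f u \<in> Y' \<and> f (f u) = u \<and> f u \<noteq> u"
    proof
      fix u assume u: "u \<in> Y'"
      then have uY: "u \<in> Y" "u \<noteq> x" "u \<noteq> f x" unfolding Y'_def by auto
      have "f u \<noteq> x" using uY less.prems(2) by metis
      moreover have "f u \<noteq> f x" using uY less.prems(2) x by metis
      ultimately show "f u \<in> Y' \<and> f (f u) = u \<and> f u \<noteq> u" using uY less.prems(2) unfolding Y'_def by auto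
    qed
    moreover have "finite Y'" using less.prems(1) unfolding Y'_def by simp
    moreover have "card Y' < card Y" using cY by simp
    ultimately have "even (card Y')" using less.hyps by blast
    then show ?thesis using cY by simp
  qed
qed

lemma invol_parity:
  assumes "finite W" "\<forall>x\<in>W. f x \<in> W \<and> f (f x) = x"
  shows "even (card W) \<longleftrightarrow> even (card {x\<in>W. f x = x})"
proof -
  let ?F = "{x\<in>W. f x = x}"
  have "\<forall>x\<in>W - ?F. f x \<in> W - ?F \<and> f (f x) = x \<and> f x \<noteq> x"
  proof
    fix x assume x: "x \<in> W - ?F"
    then have "x \<in> W" "f x \<noteq> x" by auto
    then have "f x \<in> W" "f (f x) = x" using assms(2) by auto
    moreover have "f (f x) \<noteq> f x" using \<open>f x \<noteq> x\<close> \<open>f (f x) = x\<close> by simp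
    ultimately show "f x \<in> W - ?F \<and> f (f x) = x \<and> f x \<noteq> x" using \<open>f x \<noteq> x\<close> by simp
  qed
  note inv = this
  have fin: "finite (W - ?F)" using assms(1) by blast
  have "even (card (W - ?F))" by (rule invol_even[OF fin inv])
  moreover have "card W = card ?F + card (W - ?F)"
  proof -
    have "?F \<subseteq> W" by blast
    then have "card (W - ?F) = card W - card ?F" using assms(1) by (simp add: card_Diff_subset)
    moreover have "card ?F \<le> card W" using \<open>?F \<subseteq> W\<close> assms(1) by (simp add: card_mono)
    ultimately show ?thesis by linarith
  qed
  ultimately show ?thesis by simp
qed

lemma elem_prime_order:
  assumes "group G" "finite (carrier G)" "Factorial_Ring.prime p" "p dvd order G"
  shows "\<exists>x\<in>carrier G. group.ord G x = p"
proof -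
  interpret group G by fact
  obtain k where m: "order G = p ^ 1 * k" using assms(4) by auto
  obtain H where H: "subgroup H G" "card H = p ^ 1"
    using sylow_thm[OF assms(3) assms(1) m assms(2)] by blast
  have "card H \<ge> 2" using H(2) assms(3) prime_ge_2_nat by simp
  then obtain a b where ab: "a \<in> H" "b \<in> H" "a \<noteq> b" using two_elems by blast
  then obtain x where x: "x \<in> H" "x \<noteq> \<one>\<^bsub>G\<^esub>" by metis
  have xG: "x \<in> carrier G" using x(1) H(1) subgroup.subset by blast
  have gH: "group (G\<lparr>carrier := H\<rparr>)" using subgroup.subgroup_is_group[OF H(1) assms(1)] .
  have "x [^]\<^bsub>G\<lparr>carrier := H\<rparr>\<^esub> order (G\<lparr>carrier := H\<rparr>) = \<one>\<^bsub>G\<lparr>carrier := H\<rparr>\<^esub>"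
    using group.pow_order_eq_1[OF gH] x(1) by simp
  then have "x [^]\<^bsub>G\<^esub> p = \<one>\<^bsub>G\<^esub>" using H(2) by (simp add: nat_pow_def order_def)
  then have "ord x dvd p" using pow_eq_id xG by blast
  moreover have "ord x \<noteq> 1" using ord_eq_1 xG x(2) by blast
  ultimately have "ord x = p" using assms(3) unfolding prime_nat_iff by blast
  then show ?thesis using xG by blast
qed

lemma pow2_lemma: "(n::nat) > 0 \<Longrightarrow> (\<forall>p. Factorial_Ring.prime p \<longrightarrow> p dvd n \<longrightarrow> p = 2) \<Longrightarrow> \<exists>k. n = 2^k"
proof (induction n rule: less_induct)
  case (less n)
  show ?case
  proof (cases "n = 1")
    case True then show ?thesis by (metis power_0)
  next
    case False
    then obtain p where p: "Factorial_Ring.prime p" "p dvd n" using prime_factor_nat by blast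
    then have "p = 2" using less by blast
    then obtain m where m: "n = 2 * m" using p by blast
    have "m < n" "m > 0" using m less(2) by simp_all
    moreover have "\<forall>p. Factorial_Ring.prime p \<longrightarrow> p dvd m \<longrightarrow> p = 2" using less m by (meson dvd_trans dvd_triv_right)
    ultimately obtain k where "m = 2^k" using less by blast
    then show ?thesis using m by (metis power_Suc)
  qed
qed



theorem mainTheorem12:
  fixes G :: "('a, 'b) monoid_scheme"
  assumes "group G"
    and "finite (carrier G)"
    and "even (order G)"
    and "\<not> is_p_group G"
  shows "\<not> minimally_edge_connected (carrier G) (coprime_graph_edges G)"
proof
  assume mec: "minimally_edge_connected (carrier G) (coprime_graph_edges G)"
  interpret group G by fact
  define V where "V = carrier G"
  define E where "E = coprime_graph_edges G"
  have edge_iff: "{v, u} \<in> E \<longleftrightarrow> v \<in> V \<and> u \<in> V \<and> v \<noteq> u \<and> coprime (ord v) (ord u)" for v u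
  proof
    assume "{v, u} \<in> E"
    then obtain a b where ab: "{v, u} = {a, b}" "a \<in> V" "b \<in> V" "a \<noteq> b" "coprime (ord a) (ord b)"
      unfolding E_def coprime_graph_edges_def V_def by blast
    then have "(v = a \<and> u = b) \<or> (v = b \<and> u = a)" by (simp add: doubleton_eq_iff)
    then show "v \<in> V \<and> u \<in> V \<and> v \<noteq> u \<and> coprime (ord v) (ord u)"
      using ab by (auto simp: coprime_commute)
  next
    assume "v \<in> V \<and> u \<in> V \<and> v \<noteq> u \<and> coprime (ord v) (ord u)"
    then show "{v, u} \<in> E" unfolding E_def coprime_graph_edges_def V_def by blast
  qed
  have simple: "simple_on V E"
    unfolding simple_on_def
  proof
    fix e assume "e \<in> E"
    then obtain a b where "e = {a, b}" "a \<in> V" "b \<in> V" "a \<noteq> b"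
      unfolding E_def coprime_graph_edges_def V_def by blast
    then show "\<exists>a b. e = {a, b} \<and> a \<in> V \<and> b \<in> V \<and> a \<noteq> b" by blast
  qed
  have nbr_eq: "nbr E v = {u \<in> V. u \<noteq> v \<and> coprime (ord v) (ord u)}" if "v \<in> V" for v
    using that edge_iff unfolding nbr_def by auto
  have finV: "finite V" using assms(2) V_def by simp
  have npos: "order G > 0" using assms(2) order_gt_0_iff_finite by blast
  have V2: "card V \<ge> 2" using npos assms(3) unfolding V_def order_def
    by (metis One_nat_def Suc_1 Suc_leI dvd_imp_le le_antisym not_less_eq_eq odd_one)
  obtain w where w: "w \<in> V" "ord w = 2"
    using elem_prime_order[OF assms(1,2), of 2] assms(3) V_def by auto
  obtain q where q: "Factorial_Ring.prime q" "q dvd order G" "q \<noteq> 2"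
  proof -
    have "\<not> (\<forall>p. Factorial_Ring.prime p \<longrightarrow> p dvd order G \<longrightarrow> p = 2)"
    proof
      assume "\<forall>p. Factorial_Ring.prime p \<longrightarrow> p dvd order G \<longrightarrow> p = 2"
      then obtain k where "order G = 2 ^ k" using pow2_lemma npos by blast
      then have "is_p_group G" unfolding is_p_group_def using two_is_prime_nat by blast
      then show False using assms(4) by blast
    qed
    then show ?thesis using that by blast
  qed
  have q3: "q > 2" using q(1,3) prime_ge_2_nat by (metis le_neq_implies_less)
  obtain z where z: "z \<in> V" "ord z = q"
    using elem_prime_order[OF assms(1,2) q(1,2)] V_def by auto
  define Od where "Od = {u \<in> V. odd (ord u)}"
  define Rq where "Rq = {u \<in> V. \<not> q dvd ord u}"
  define T where "T = {u \<in> V. inv\<^bsub>G\<^esub> u = u}"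
  have nw: "nbr E w = Od"
  proof -
    have "nbr E w = {u \<in> V. u \<noteq> w \<and> coprime 2 (ord u)}" using nbr_eq[OF w(1)] w(2) by simp
    also have "\<dots> = Od" unfolding Od_def using w(2) by (auto simp: coprime_left_2_iff_odd)
    finally show ?thesis .
  qed
  have nz: "nbr E z = Rq"
  proof -
    have "nbr E z = {u \<in> V. u \<noteq> z \<and> coprime q (ord u)}" using nbr_eq[OF z(1)] z(2) by simp
    also have "\<dots> = Rq" unfolding Rq_def using z(2) q(1)
      by (auto simp: prime_imp_coprime_nat coprime_absorb_left prime_nat_iff)
    finally show ?thesis .
  qed
  have invV: "\<forall>x\<in>V. inv\<^bsub>G\<^esub> x \<in> V \<and> inv\<^bsub>G\<^esub> (inv\<^bsub>G\<^esub> x) = x" unfolding V_def by simp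
  have sq: "ord u dvd 2" if "u \<in> V" "inv\<^bsub>G\<^esub> u = u" for u
  proof -
    have "u \<otimes>\<^bsub>G\<^esub> u = \<one>\<^bsub>G\<^esub>" using that r_inv[of u] V_def by simp
    then have "u [^]\<^bsub>G\<^esub> (2::nat) = \<one>\<^bsub>G\<^esub>" using that V_def by (simp add: numeral_2_eq_2)
    then show ?thesis using pow_eq_id that V_def by blast
  qed
  have evT: "even (card T)"
    using invol_parity[OF finV invV] assms(3) unfolding T_def V_def order_def by simp
  have "odd (card Od)"
  proof -
    have fO: "finite Od" using finV unfolding Od_def by simp
    have iO: "\<forall>x\<in>Od. inv\<^bsub>G\<^esub> x \<in> Od \<and> inv\<^bsub>G\<^esub> (inv\<^bsub>G\<^esub> x) = x" unfolding Od_def V_def by simp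
    have "{x \<in> Od. inv\<^bsub>G\<^esub> x = x} = {\<one>\<^bsub>G\<^esub>}"
    proof
      show "{x \<in> Od. inv\<^bsub>G\<^esub> x = x} \<subseteq> {\<one>\<^bsub>G\<^esub>}"
      proof
        fix u assume u: "u \<in> {x \<in> Od. inv\<^bsub>G\<^esub> x = x}"
        then have "u \<in> V" "inv\<^bsub>G\<^esub> u = u" "odd (ord u)" unfolding Od_def by auto
        then have "ord u dvd 2" using sq by blast
        then have "ord u \<le> 2" by (simp add: dvd_imp_le)
        then have "ord u = 1" using \<open>odd (ord u)\<close> by presburger
        then show "u \<in> {\<one>\<^bsub>G\<^esub>}" using ord_eq_1 \<open>u \<in> V\<close> V_def by simp
      qed
      show "{\<one>\<^bsub>G\<^esub>} \<subseteq> {x \<in> Od. inv\<^bsub>G\<^esub> x = x}" unfolding Od_def V_def by simp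
    qed
    then show ?thesis using invol_parity[OF fO iO] by simp
  qed
  moreover have "even (card Rq)"
  proof -
    have fR: "finite Rq" using finV unfolding Rq_def by simp
    have iR: "\<forall>x\<in>Rq. inv\<^bsub>G\<^esub> x \<in> Rq \<and> inv\<^bsub>G\<^esub> (inv\<^bsub>G\<^esub> x) = x" unfolding Rq_def V_def by simp
    have "{x \<in> Rq. inv\<^bsub>G\<^esub> x = x} = T"
    proof
      show "{x \<in> Rq. inv\<^bsub>G\<^esub> x = x} \<subseteq> T" unfolding Rq_def T_def by blast
      show "T \<subseteq> {x \<in> Rq. inv\<^bsub>G\<^esub> x = x}"
      proof
        fix u assume "u \<in> T"
        then have u: "u \<in> V" "inv\<^bsub>G\<^esub> u = u" unfolding T_def by auto
        have "\<not> q dvd ord u"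
        proof
          assume "q dvd ord u"
          then have "q dvd 2" using sq[OF u] dvd_trans by blast
          then show False using q3 dvd_imp_le by fastforce
        qed
        then show "u \<in> {x \<in> Rq. inv\<^bsub>G\<^esub> x = x}" using u unfolding Rq_def by simp
      qed
    qed
    then show ?thesis using invol_parity[OF fR iR] evT by simp
  qed
  ultimately have dne: "card (nbr E w) \<noteq> card (nbr E z)" using nw nz by auto
  define \<delta> where "\<delta> = Min ((\<lambda>v. card (nbr E v)) ` V)"
  have Vne: "V \<noteq> {}" using w(1) by blast
  have mindeg: "\<forall>u\<in>V. card (nbr E u) \<ge> \<delta>" unfolding \<delta>_def using finV by simp
  obtain v0 where v0: "v0 \<in> V" "card (nbr E v0) = \<delta>"
  proof -
    have "\<delta> \<in> (\<lambda>v. card (nbr E v)) ` V" unfolding \<delta>_def using finV Vne by (simp add: Min_in)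
    then show ?thesis using that by (metis imageE)
  qed
  obtain y where y: "y \<in> V" "y \<noteq> \<one>\<^bsub>G\<^esub>" "card (nbr E y) \<ge> \<delta> + 1"
  proof (cases "card (nbr E w) > \<delta>")
    case True
    moreover have "w \<noteq> \<one>\<^bsub>G\<^esub>" using w(2) by auto
    ultimately show ?thesis using that w(1) by simp
  next
    case False
    then have "card (nbr E w) = \<delta>" using mindeg w(1) by (meson le_antisym not_less)
    then have "card (nbr E z) > \<delta>" using dne mindeg z(1) by (meson le_neq_implies_less)
    moreover have "z \<noteq> \<one>\<^bsub>G\<^esub>" using z(2) q3 by auto
    ultimately show ?thesis using that z(1) by simp
  qed
  have oneV: "\<one>\<^bsub>G\<^esub> \<in> V" unfolding V_def by simp
  have e: "{\<one>\<^bsub>G\<^esub>, y} \<in> E" using edge_iff oneV y(1,2) by auto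
  have hub: "\<forall>u\<in>V. u \<noteq> \<one>\<^bsub>G\<^esub> \<longrightarrow> {\<one>\<^bsub>G\<^esub>, u} \<in> E" using edge_iff oneV by auto
  have kd: "edge_connectivity V E \<le> \<delta>" using ec_le_deg[OF V2 finV simple v0(1)] v0(2) by simp
  have conn: "graph_connected V E" using mec unfolding minimally_edge_connected_def V_def E_def by blast
  have kpos: "edge_connectivity V E \<ge> 1" using ec_pos[OF V2 finV simple conn] .
  have "edge_connectivity V E \<le> edge_connectivity V (E - {{\<one>\<^bsub>G\<^esub>, y}})"
    by (rule ec_keep[OF V2 finV simple e hub mindeg y(3) kd])
  moreover have "edge_connectivity V (E - {{\<one>\<^bsub>G\<^esub>, y}}) = edge_connectivity V E - 1"
    using mec e unfolding minimally_edge_connected_def V_def E_def by blast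
  ultimately show False using kpos by linarith
qed

end
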